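(* Let $(X,d_X,\mu,T)$ and $(Y,d_Y,\nu,S)$ be compact metric measure-preserving systems with $T,S$ continuous and $\mu,\nu$ of full support, and let $\lambda,\lambda'\in\mathcal J(T,S)$. Let $U:(X\times Y,\lambda)\to(X\times Y,\lambda')$ be a kernel-preserving isomorphism between $\mathcal K_\lambda$ and $\mathcal K_{\lambda'}$. Then there are $A\in\mathrm{Aut}_{\rm md}(X,d_X,\mu,T)$ and $B\in\mathrm{Aut}_{\rm md}(Y,d_Y,\nu,S)$ such that $U(x,y)=(Ax,By)$ for $\lambda$-a.e. $(x,y)$. Consequently $\lambda'=(A\times B)_\#\lambda$.
   Context: A compact metric measure-preserving system $(X,d_X,\mu,T)$: $(X,d_X)$ compact metric, $\mu$ Borel probability, $T$ Borel with $T_\#\mu=\mu$; probability spaces are standard and completed, maps and equalities modulo null sets. $\mathcal J(T,S)$ is the set of Borel probability measures on $X\times Y$ with marginals $\mu,\nu$ invariant under $T\times S$. For $\lambda\in\mathcal J(T,S)$, $\mathcal K_\lambda$ is the marked colored kernel space on $(X\times Y,\lambda)$ with marks $M_X^{a,b}(x,y)=d_X(T^ax,T^bx)$, $M_Y^{a,b}(x,y)=d_Y(S^ay,S^by)$ and kernels $K_X^{a,b}((x,y),(x',y'))=d_X(T^ax,T^bx')$, $K_Y^{a,b}((x,y),(x',y'))=d_Y(S^ay,S^by')$ for $a,b\ge0$. A kernel-preserving isomorphism between $\mathcal K_\lambda$ and $\mathcal K_{\lambda'}$ is a measure-space isomorphism $U:(X\times Y,\lambda)\to(X\times Y,\lambda')$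 with $M(z)=M(Uz)$ $\lambda$-a.e. for every mark $M$ and $K(z,z')=K(Uz,Uz')$ $\lambda\otimes\lambda$-a.e. for every kernel $K$ in the list above. $\mathrm{Aut}_{\rm md}(X,d_X,\mu,T)$ is the group of measure-space automorphisms $A$ of $(X,\mu)$ with $A\circ T=T\circ A$ modulo $\mu$ and $d_X(Ax,Ax')=d_X(x,x')$ for $\mu\otimes\mu$-a.e. $(x,x')$; similarly for $Y$. *)

theory Defs
  imports "HOL-Probability.Probability"
begin

definition mod0_iso :: "'c measure \<Rightarrow> 'c measure \<Rightarrow> ('c \<Rightarrow> 'c) \<Rightarrow> bool" where
  "mod0_iso M N U \<longleftrightarrow> (\<exists>V. U \<in> measurable M N \<and> V \<in> measurable N M
     \<and> distr M N U = N \<and> distr N M V = M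
     \<and> (AE x in M. V (U x) = x) \<and> (AE y in N. U (V y) = y))"

text \<open>Compact metric measure-preserving system on the metric type 'a (metric = dist).\<close>
definition cmmps :: "'a::metric_space measure \<Rightarrow> ('a \<Rightarrow> 'a) \<Rightarrow> bool" where
  "cmmps \<mu> T \<longleftrightarrow> compact (UNIV :: 'a set) \<and> prob_space \<mu> \<and> sets \<mu> = sets borel
     \<and> T \<in> borel_measurable borel \<and> distr \<mu> borel T = \<mu>"

definition full_support :: "'a::topological_space measure \<Rightarrow> bool" where
  "full_support \<mu> \<longleftrightarrow> (\<forall>W. open W \<and> W \<noteq> {} \<longrightarrow> emeasure \<mu> W > 0)"

definition joining :: "'a::metric_space measure \<Rightarrow> 'b::metric_space measure \<Rightarrow> ('a \<Rightarrow> 'a) \<Rightarrow> ('b \<Rightarrow> 'b)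
    \<Rightarrow> ('a \<times> 'b) measure \<Rightarrow> bool" where
  "joining \<mu> \<nu> T S L \<longleftrightarrow> prob_space L \<and> sets L = sets borel
     \<and> distr L borel fst = \<mu> \<and> distr L borel snd = \<nu>
     \<and> distr L borel (map_prod T S) = L"

text \<open>Almost-everywhere statements
  w.r.t. a measure and its completion coincide, so we phrase them with L and L \<Otimes> L.\<close>
definition kp_iso :: "('a::metric_space \<Rightarrow> 'a) \<Rightarrow> ('b::metric_space \<Rightarrow> 'b) \<Rightarrow> ('a \<times> 'b) measure
    \<Rightarrow> ('a \<times> 'b) measure \<Rightarrow> ('a \<times> 'b \<Rightarrow> 'a \<times> 'b) \<Rightarrow> bool" where
  "kp_iso T S L L' U \<longleftrightarrow> mod0_iso (completion L) (completion L') U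
   \<and> (\<forall>a b::nat. AE z in L.
        dist ((T^^a) (fst z)) ((T^^b) (fst z)) = dist ((T^^a) (fst (U z))) ((T^^b) (fst (U z))))
   \<and> (\<forall>a b::nat. AE z in L.
        dist ((S^^a) (snd z)) ((S^^b) (snd z)) = dist ((S^^a) (snd (U z))) ((S^^b) (snd (U z))))
   \<and> (\<forall>a b::nat. AE p in L \<Otimes>\<^sub>M L.
        dist ((T^^a) (fst (fst p))) ((T^^b) (fst (snd p)))
        = dist ((T^^a) (fst (U (fst p)))) ((T^^b) (fst (U (snd p)))))
   \<and> (\<forall>a b::nat. AE p in L \<Otimes>\<^sub>M L.
        dist ((S^^a) (snd (fst p))) ((S^^b) (snd (snd p)))
        = dist ((S^^a) (snd (U (fst p)))) ((S^^b) (snd (U (snd p)))))"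

definition aut_md :: "'a::metric_space measure \<Rightarrow> ('a \<Rightarrow> 'a) \<Rightarrow> ('a \<Rightarrow> 'a) \<Rightarrow> bool" where
  "aut_md \<mu> T A \<longleftrightarrow> mod0_iso (completion \<mu>) (completion \<mu>) A
     \<and> (AE x in \<mu>. A (T x) = T (A x))
     \<and> (AE p in \<mu> \<Otimes>\<^sub>M \<mu>. dist (A (fst p)) (A (snd p)) = dist (fst p) (snd p))"

end

theory Submission
  imports Defs
begin

lemma ae_hits:
  assumes Q: "AE z in L. Q z" and D: "distr L borel p = \<mu>" and pm: "p \<in> L \<rightarrow>\<^sub>M borel"
    and fs: "full_support \<mu>" and W: "open W" "W \<noteq> {}"
  shows "\<exists>z\<in>space L. Q z \<and> p z \<in> W"
proof (rule ccontr)
  assume nn: "\<not> ?thesis"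
  have "AE z in L. p z \<notin> W"
    using Q by (rule AE_mp) (use nn in \<open>auto intro!: AE_I2\<close>)
  moreover have S: "p -` W \<inter> space L \<in> sets L"
    using pm W by (auto intro: measurable_sets borel_open)
  ultimately have "emeasure L (p -` W \<inter> space L) = 0"
    by (subst (asm) AE_iff_measurable[OF S]) auto
  moreover have "emeasure \<mu> W = emeasure L (p -` W \<inter> space L)"
    using D emeasure_distr[OF pm, of W] W by (auto intro: borel_open)
  moreover have "emeasure \<mu> W > 0" using fs W unfolding full_support_def by auto
  ultimately show False by simp
qed

lemma key:
  fixes p g :: "'z \<Rightarrow> 'a::metric_space"
  assumes cpt: "compact (UNIV::'a set)" and L: "prob_space L" and pm: "p \<in> L \<rightarrow>\<^sub>M borel"
    and D: "distr L borel p = \<mu>" and fs: "full_support \<mu>"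
    and H: "AE q in L \<Otimes>\<^sub>M L. dist (p (fst q)) (p (snd q)) = dist (g (fst q)) (g (snd q))"
  shows "\<exists>A. (\<forall>x y. dist (A x) (A y) = dist x y) \<and> (AE z in L. g z = A (p z))"
proof -
  interpret L: prob_space L by fact
  interpret pair_prob_space L L ..
  from AE_pair[OF H] have H2: "AE z in L. AE z' in L. dist (p z) (p z') = dist (g z) (g z')"
    by simp
  define G where "G = {z \<in> space L. AE z' in L. dist (p z) (p z') = dist (g z) (g z')}"
  have AEG: "AE z in L. z \<in> G"
    by (rule AE_mp[OF H2]) (auto simp: G_def intro!: AE_I2)
  have dense: "\<exists>z\<in>G. dist x (p z) < e" if e0: "e > 0" for x e
  proof -
    obtain z where "z \<in> space L" "z \<in> G" "p z \<in> ball x e"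
      using ae_hits[OF AEG D pm fs, of "ball x e"] e0 by auto
    then show ?thesis by auto
  qed
  have iso: "dist (g z1) (g z2) = dist (p z1) (p z2)" if z: "z1 \<in> G" "z2 \<in> G" for z1 z2
  proof -
    have both: "dist (g z1) (g z2) \<le> dist (p z1) (p z2) + 2*e \<and> dist (p z1) (p z2) \<le> dist (g z1) (g z2) + 2*e"
      if "e > 0" for e
    proof -
      have "AE z' in L. dist (p z1) (p z') = dist (g z1) (g z') \<and> dist (p z2) (p z') = dist (g z2) (g z')"
        using z unfolding G_def by auto
      from ae_hits[OF this D pm fs, of "ball (p z1) e"] that obtain z' where
        z': "dist (p z1) (p z') = dist (g z1) (g z')" "dist (p z2) (p z') = dist (g z2) (g z')"
          "dist (p z1) (p z') < e"
        by (auto simp: dist_commute)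
      have t1: "dist (g z1) (g z2) \<le> dist (g z1) (g z') + dist (g z2) (g z')"
        by (metis dist_commute dist_triangle)
      have t2: "dist (p z2) (p z') \<le> dist (p z1) (p z2) + dist (p z1) (p z')"
        by (metis dist_commute dist_triangle)
      have t3: "dist (p z1) (p z2) \<le> dist (p z1) (p z') + dist (p z2) (p z')"
        by (metis dist_commute dist_triangle)
      have t4: "dist (g z2) (g z') \<le> dist (g z1) (g z2) + dist (g z1) (g z')"
        by (metis dist_commute dist_triangle)
      show ?thesis using z' t1 t2 t3 t4 by linarith
    qed
    show ?thesis
    proof (rule antisym)
      show "dist (g z1) (g z2) \<le> dist (p z1) (p z2)"
        by (rule field_le_epsilon) (use both[of "_/2"] in auto)
      show "dist (p z1) (p z2) \<le> dist (g z1) (g z2)"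
        by (rule field_le_epsilon) (use both[of "_/2"] in auto)
    qed
  qed
  have exA: "\<exists>y. \<forall>z\<in>G. dist y (g z) = dist x (p z)" for x
  proof -
    have "\<forall>n. \<exists>z\<in>G. dist x (p z) < inverse (real (Suc n))"
      using dense by simp
    then obtain zs where zs: "\<And>n. zs n \<in> G" "\<And>n. dist x (p (zs n)) < inverse (real (Suc n))"
      by metis
    have px: "(\<lambda>n. p (zs n)) \<longlonglongrightarrow> x"
    proof (rule tendstoI)
      fix e :: real assume "e > 0"
      have "\<forall>\<^sub>F n in sequentially. inverse (real (Suc n)) < e"
        using LIMSEQ_inverse_real_of_nat \<open>e > 0\<close> by (auto dest: order_tendstoD)
      then show "\<forall>\<^sub>F n in sequentially. dist (p (zs n)) x < e"
        by eventually_elim (use zs(2) in \<open>auto simp: dist_commute intro: less_trans\<close>)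
    qed
    obtain y r where r: "strict_mono r" "((\<lambda>n. g (zs n)) \<circ> r) \<longlonglongrightarrow> y"
      using cpt unfolding compact_def by blast
    have "dist y (g z) = dist x (p z)" if "z \<in> G" for z
    proof -
      have "(\<lambda>n. dist (g (zs (r n))) (g z)) \<longlonglongrightarrow> dist y (g z)"
        using r(2) by (intro tendsto_dist) (auto simp: o_def)
      moreover have "(\<lambda>n. dist (p (zs (r n))) (p z)) \<longlonglongrightarrow> dist x (p z)"
        using LIMSEQ_subseq_LIMSEQ[OF px r(1)] by (intro tendsto_dist) (auto simp: o_def)
      moreover have "(\<lambda>n. dist (g (zs (r n))) (g z)) = (\<lambda>n. dist (p (zs (r n))) (p z))"
        using iso zs(1) that by auto
      ultimately show ?thesis using LIMSEQ_unique by metis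
    qed
    then show ?thesis by blast
  qed
  then obtain A where A: "\<And>x z. z \<in> G \<Longrightarrow> dist (A x) (g z) = dist x (p z)"
    by metis
  have Aiso: "dist (A x) (A y) = dist x y" for x y
  proof -
    have both: "dist (A x) (A y) \<le> dist x y + 2*e \<and> dist x y \<le> dist (A x) (A y) + 2*e"
      if e0: "e > 0" for e
    proof -
      obtain z where z: "z \<in> G" "dist x (p z) < e" using dense e0 by blast
      have a1: "dist (A x) (g z) = dist x (p z)" "dist (A y) (g z) = dist y (p z)" using A z by auto
      have t1: "dist (A x) (A y) \<le> dist (A x) (g z) + dist (A y) (g z)"
        by (metis dist_commute dist_triangle)
      have t2: "dist y (p z) \<le> dist x y + dist x (p z)"
        by (metis dist_commute dist_triangle)
      have t3: "dist x y \<le> dist x (p z) + dist y (p z)"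
        by (metis dist_commute dist_triangle)
      have t4: "dist (A y) (g z) \<le> dist (A x) (A y) + dist (A x) (g z)"
        by (metis dist_commute dist_triangle)
      show ?thesis using a1 z t1 t2 t3 t4 by linarith
    qed
    show ?thesis
    proof (rule antisym)
      show "dist (A x) (A y) \<le> dist x y"
        by (rule field_le_epsilon) (use both[of "_/2"] in auto)
      show "dist x y \<le> dist (A x) (A y)"
        by (rule field_le_epsilon) (use both[of "_/2"] in auto)
    qed
  qed
  have "AE z in L. g z = A (p z)"
  proof (rule AE_mp[OF AEG], rule AE_I2, rule impI)
    fix z assume "z \<in> G"
    from A[OF this, of "p z"] show "g z = A (p z)" by simp
  qed
  with Aiso show ?thesis by blast
qed

lemma iso_cont:
  assumes iso: "\<And>x y. dist (A x) (A y) = dist x y"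
  shows "continuous_on UNIV A"
  unfolding continuous_on_iff using iso by (metis UNIV_I)

lemma iso_funpow:
  fixes A :: "'a::metric_space \<Rightarrow> 'a"
  assumes iso: "\<And>x y. dist (A x) (A y) = dist x y"
  shows "dist ((A^^n) u) ((A^^n) v) = dist u v"
  by (induction n) (auto simp: iso)

lemma iso_surj:
  fixes A :: "'a::metric_space \<Rightarrow> 'a"
  assumes cpt: "compact (UNIV::'a set)" and iso: "\<And>x y. dist (A x) (A y) = dist x y"
  shows "surj A"
proof (rule ccontr)
  assume "\<not> surj A"
  then obtain y where y: "y \<notin> range A" by auto
  have "compact (range A)"
    using compact_continuous_image[OF iso_cont[OF iso] cpt] by simp
  then have "open (- range A)" by (simp add: compact_imp_closed open_Compl)
  then obtain d where d: "d > 0" "\<And>x'. dist x' y < d \<Longrightarrow> x' \<in> - range A"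
  proof -
    from \<open>open (- range A)\<close> y obtain e where "e > 0" "\<forall>x'. dist x' y < e \<longrightarrow> x' \<in> - range A"
      unfolding open_dist by blast
    then show ?thesis using that by blast
  qed
  have far: "dist (A x) y \<ge> d" for x
  proof (rule ccontr)
    assume "\<not> d \<le> dist (A x) y"
    then have "A x \<in> - range A" using d(2)[of "A x"] by simp
    then show False by simp
  qed
  define s where "s n = (A^^n) y" for n
  have sep: "dist (s m) (s n) \<ge> d" if "m < n" for m n
  proof -
    define k where "k = n - m - 1"
    have k: "n = m + Suc k" using \<open>m < n\<close> unfolding k_def by simp
    have "s n = (A^^m) (A ((A^^k) y))"
      by (simp only: s_def k funpow_add comp_apply funpow.simps(2))
    then have "dist (s m) (s n) = dist y (A ((A^^k) y))"
      unfolding s_def by (simp add: iso_funpow[OF iso])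
    then show ?thesis using far[of "(A^^k) y"] by (simp add: dist_commute)
  qed
  obtain l r where r: "strict_mono r" "(s \<circ> r) \<longlonglongrightarrow> l"
    using cpt unfolding compact_def by (meson UNIV_I)
  have "Cauchy (s \<circ> r)" by (rule LIMSEQ_imp_Cauchy[OF r(2)])
  then obtain M where M: "\<And>m n. m \<ge> M \<Longrightarrow> n \<ge> M \<Longrightarrow> dist ((s \<circ> r) m) ((s \<circ> r) n) < d"
    using \<open>Cauchy (s \<circ> r)\<close> d(1) unfolding Cauchy_def by meson
  have "dist (s (r M)) (s (r (Suc M))) < d" using M[of M "Suc M"] by simp
  moreover have "r M < r (Suc M)" using r(1) by (simp add: strict_mono_def)
  ultimately show False using sep[of "r M" "r (Suc M)"] by simp
qed

lemma completion_pres: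
  assumes f: "f \<in> M \<rightarrow>\<^sub>M M"
    and pres: "\<And>E. E \<in> sets M \<Longrightarrow> emeasure M (f -` E \<inter> space M) = emeasure M E"
  shows "f \<in> completion M \<rightarrow>\<^sub>M completion M" "distr (completion M) (completion M) f = completion M"
proof -
  have null: "f -` N \<inter> space M \<in> null_sets M" if "N \<in> null_sets M" for N
    using pres[of N] that measurable_sets[OF f, of N] by (auto simp: null_sets_def)
  have dec: "f -` E \<inter> space M \<in> sets (completion M) \<and>
      emeasure (completion M) (f -` E \<inter> space M) = emeasure (completion M) E"
    if E: "E \<in> sets (completion M)" for E
  proof -
    obtain S N N' where SN: "E = S \<union> N" "N \<subseteq> N'" "N' \<in> null_sets M" "S \<in> sets M"
      using E by (rule sets_completionE)
    have fS: "f -` S \<inter> space M \<in> sets M" using measurable_sets[OF f SN(4)] .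
    have fN: "f -` N' \<inter> space M \<in> null_sets M" using null SN(3) by blast
    have eq: "f -` E \<inter> space M = (f -` S \<inter> space M) \<union> (f -` N \<inter> space M)"
      using SN(1) by auto
    have m1: "f -` E \<inter> space M \<in> sets (completion M)"
      unfolding eq by (rule sets_completionI[OF refl _ fN fS]) (use SN(2) in auto)
    have "emeasure (completion M) (f -` E \<inter> space M) = emeasure (completion M) (f -` S \<inter> space M)"
    proof (rule emeasure_eq_AE)
      show "AE x in completion M. (x \<in> f -` E \<inter> space M) = (x \<in> f -` S \<inter> space M)"
        using AE_not_in[OF null_sets_completionI[OF fN]] by eventually_elim (use SN in auto)
    qed (use m1 fS in auto)
    also have "\<dots> = emeasure M (f -` S \<inter> space M)" using fS by simp
    also have "\<dots> = emeasure M S" using pres SN(4) by simp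
    also have "\<dots> = emeasure (completion M) S" using SN(4) by simp
    also have "\<dots> = emeasure (completion M) E"
    proof (rule emeasure_eq_AE)
      show "AE x in completion M. (x \<in> S) = (x \<in> E)"
        using AE_not_in[OF null_sets_completionI[OF SN(3)]] by eventually_elim (use SN in auto)
    qed (use E SN(4) in auto)
    finally show ?thesis using m1 by simp
  qed
  show fc: "f \<in> completion M \<rightarrow>\<^sub>M completion M"
    by (rule measurableI) (use measurable_space[OF f] dec in auto)
  show "distr (completion M) (completion M) f = completion M"
  proof (rule measure_eqI)
    show "sets (distr (completion M) (completion M) f) = sets (completion M)" by simp
    fix E assume "E \<in> sets (distr (completion M) (completion M) f)"
    then have E: "E \<in> sets (completion M)" by simp
    show "emeasure (distr (completion M) (completion M) f) E = emeasure (completion M) E"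
      using emeasure_distr[OF fc E] dec[OF E] by simp
  qed
qed


lemma commute_lemma:
  fixes \<pi> :: "'z \<Rightarrow> 'a::metric_space"
  assumes L: "prob_space L" and pm: "\<pi> \<in> L \<rightarrow>\<^sub>M borel" and D: "distr L borel \<pi> = \<mu>"
    and fs: "full_support \<mu>" and Aiso: "\<And>x y. dist (A x) (A y) = dist x y"
    and contT: "continuous_on UNIV T"
    and AEA: "AE z in L. g z = A (\<pi> z)"
    and K: "AE q in L \<Otimes>\<^sub>M L. dist (T (\<pi> (fst q))) (\<pi> (snd q)) = dist (T (g (fst q))) (g (snd q))"
  shows "AE x in \<mu>. A (T x) = T (A x)"
proof -
  interpret L: prob_space L by fact
  interpret pair_prob_space L L ..
  from AE_pair[OF K] have K2: "AE z in L. AE z' in L. dist (T (\<pi> z)) (\<pi> z') = dist (T (g z)) (g z')"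
    by simp
  have K3: "AE z in L. AE z' in L. dist (T (\<pi> z)) (\<pi> z') = dist (T (A (\<pi> z))) (A (\<pi> z'))"
    using K2 AEA
  proof eventually_elim
    case (elim z)
    from elim(1) AEA show ?case
    proof eventually_elim
      case (elim z')
      then show ?case using \<open>g z = A (\<pi> z)\<close> by simp
    qed
  qed
  have C: "A (T (\<pi> z)) = T (A (\<pi> z))"
    if h: "AE z' in L. dist (T (\<pi> z)) (\<pi> z') = dist (T (A (\<pi> z))) (A (\<pi> z'))" for z
  proof (rule ccontr)
    define x where "x = \<pi> z"
    define d where "d = dist (A (T x)) (T (A x))"
    assume "A (T (\<pi> z)) \<noteq> T (A (\<pi> z))"
    then have d0: "d > 0" unfolding d_def x_def by simp
    obtain z' where z': "dist (T x) (\<pi> z') = dist (T (A x)) (A (\<pi> z'))" "\<pi> z' \<in> ball (T x) (d/2)"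
      using ae_hits[OF h D pm fs, of "ball (T x) (d/2)"] d0 unfolding x_def by auto
    have a: "dist (A (T x)) (A (\<pi> z')) < d/2" using z'(2) Aiso by simp
    have b: "dist (T (A x)) (A (\<pi> z')) < d/2" using z' by simp
    have "d \<le> dist (A (T x)) (A (\<pi> z')) + dist (T (A x)) (A (\<pi> z'))"
      unfolding d_def by (metis dist_commute dist_triangle)
    with a b show False by simp
  qed
  have AE1: "AE z in L. A (T (\<pi> z)) = T (A (\<pi> z))"
    using K3 by eventually_elim (rule C)
  have cA: "continuous_on UNIV A" by (rule iso_cont[OF Aiso])
  have clo: "closed {x. A (T x) = T (A x)}"
    by (rule closed_Collect_eq) (auto intro: continuous_on_compose2[OF cA contT] continuous_on_compose2[OF contT cA])
  have "{x \<in> space borel. A (T x) = T (A x)} \<in> sets borel"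
    using borel_closed[OF clo] by simp
  then show ?thesis
    unfolding D[symmetric] using AE_distr_iff[OF pm] AE1 by simp
qed

lemma pres_lemma:
  fixes \<pi> :: "'z \<Rightarrow> 'a::topological_space"
  assumes U: "U \<in> completion L \<rightarrow>\<^sub>M completion L'" "distr (completion L) (completion L') U = completion L'"
    and pL: "\<pi> \<in> L \<rightarrow>\<^sub>M borel" and pL': "\<pi> \<in> L' \<rightarrow>\<^sub>M borel"
    and D: "distr L borel \<pi> = \<mu>" and D': "distr L' borel \<pi> = \<mu>"
    and A: "A \<in> borel \<rightarrow>\<^sub>M borel" and AE: "AE z in L. \<pi> (U z) = A (\<pi> z)"
  shows "distr \<mu> borel A = \<mu>"
proof (rule measure_eqI)
  show "sets (distr \<mu> borel A) = sets \<mu>" unfolding D[symmetric] by simp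
  fix E assume "E \<in> sets (distr \<mu> borel A)"
  then have E: "E \<in> sets borel" by simp
  have spm: "space \<mu> = UNIV" unfolding D[symmetric] by simp
  have Am: "A \<in> \<mu> \<rightarrow>\<^sub>M borel" using A unfolding D[symmetric] by simp
  have AE_m: "A -` E \<in> sets borel" using measurable_sets[OF A E] by simp
  have S1: "\<pi> -` (A -` E) \<inter> space L \<in> sets L" using measurable_sets[OF pL AE_m] .
  have S2': "\<pi> -` E \<inter> space L' \<in> sets L'" using measurable_sets[OF pL' E] .
  then have S2c: "\<pi> -` E \<inter> space L' \<in> sets (completion L')" by simp
  have S3: "U -` (\<pi> -` E \<inter> space L') \<inter> space L \<in> sets (completion L)"
    using measurable_sets[OF U(1) S2c] by simp
  have "emeasure (distr \<mu> borel A) E = emeasure \<mu> (A -` E)"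
    using emeasure_distr[OF Am E] spm by simp
  also have "\<dots> = emeasure L (\<pi> -` (A -` E) \<inter> space L)"
    unfolding D[symmetric] using emeasure_distr[OF pL AE_m] by simp
  also have "\<dots> = emeasure (completion L) (\<pi> -` (A -` E) \<inter> space L)"
    using S1 by simp
  also have "\<dots> = emeasure (completion L) (U -` (\<pi> -` E \<inter> space L') \<inter> space L)"
  proof (rule emeasure_eq_AE)
    have sp: "\<And>z. z \<in> space L \<Longrightarrow> U z \<in> space L'"
      using measurable_space[OF U(1)] by simp
    show "AE x in completion L. (x \<in> \<pi> -` (A -` E) \<inter> space L) = (x \<in> U -` (\<pi> -` E \<inter> space L') \<inter> space L)"
      using AE_completion[OF AE] by eventually_elim (use sp in auto)
  qed (use S1 S3 in auto)
  also have "\<dots> = emeasure (distr (completion L) (completion L') U) (\<pi> -` E \<inter> space L')"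
    using emeasure_distr[OF U(1) S2c] by simp
  also have "\<dots> = emeasure L' (\<pi> -` E \<inter> space L')"
    using U(2) S2' by simp
  also have "\<dots> = emeasure \<mu> E"
    unfolding D'[symmetric] using emeasure_distr[OF pL' E] by simp
  finally show "emeasure (distr \<mu> borel A) E = emeasure \<mu> E" .
qed


lemma aut_lemma:
  fixes A :: "'a::metric_space \<Rightarrow> 'a"
  assumes cpt: "compact (UNIV::'a set)" and sm: "sets \<mu> = sets borel"
    and iso: "\<And>x y. dist (A x) (A y) = dist x y" and D: "distr \<mu> borel A = \<mu>"
    and comm: "AE x in \<mu>. A (T x) = T (A x)"
  shows "aut_md \<mu> T A"
proof -
  have su: "surj A" by (rule iso_surj[OF cpt iso])
  have ij: "inj A" by (rule injI) (metis iso dist_eq_0_iff)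
  define V where "V = inv A"
  have AV: "A (V y) = y" for y unfolding V_def by (rule surj_f_inv_f[OF su])
  have VA: "V (A x) = x" for x unfolding V_def by (rule inv_f_f[OF ij])
  have Viso: "dist (V x) (V y) = dist x y" for x y by (metis AV iso)
  have spm: "space \<mu> = UNIV" using sets_eq_imp_space_eq[OF sm] by simp
  have Ab: "A \<in> borel \<rightarrow>\<^sub>M borel" by (rule borel_measurable_continuous_onI[OF iso_cont[OF iso]])
  have Vb: "V \<in> borel \<rightarrow>\<^sub>M borel" by (rule borel_measurable_continuous_onI[OF iso_cont[OF Viso]])
  have Am: "A \<in> \<mu> \<rightarrow>\<^sub>M \<mu>" using Ab measurable_cong_sets[OF sm sm] by simp
  have Vm: "V \<in> \<mu> \<rightarrow>\<^sub>M \<mu>" using Vb measurable_cong_sets[OF sm sm] by simp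
  have Amb: "A \<in> \<mu> \<rightarrow>\<^sub>M borel" unfolding measurable_cong_sets[OF sm refl[of "sets (borel::'a measure)"]] by (rule Ab)
  have presA: "emeasure \<mu> (A -` E \<inter> space \<mu>) = emeasure \<mu> E" if E: "E \<in> sets \<mu>" for E
  proof -
    have "emeasure (distr \<mu> borel A) E = emeasure \<mu> (A -` E \<inter> space \<mu>)"
      using emeasure_distr[OF Amb, of E] E sm by simp
    then show ?thesis using D by simp
  qed
  have presV: "emeasure \<mu> (V -` E \<inter> space \<mu>) = emeasure \<mu> E" if E: "E \<in> sets \<mu>" for E
  proof -
    have "V -` E \<inter> space \<mu> \<in> sets \<mu>" using measurable_sets[OF Vm E] .
    from presA[OF this] have "emeasure \<mu> (A -` (V -` E \<inter> space \<mu>) \<inter> space \<mu>) = emeasure \<mu> (V -` E \<inter> space \<mu>)" .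
    moreover have "A -` (V -` E \<inter> space \<mu>) \<inter> space \<mu> = E" using spm VA by auto
    moreover have "V -` E \<inter> space \<mu> = V -` E" using spm by simp
    ultimately show ?thesis using spm by simp
  qed
  note cA = completion_pres[OF Am presA]
  note cV = completion_pres[OF Vm presV]
  have "mod0_iso (completion \<mu>) (completion \<mu>) A"
    unfolding mod0_iso_def
    by (rule exI[of _ V]) (use cA cV AV VA in \<open>auto intro!: AE_I2\<close>)
  moreover have "AE p in \<mu> \<Otimes>\<^sub>M \<mu>. dist (A (fst p)) (A (snd p)) = dist (fst p) (snd p)"
    by (rule AE_I2) (simp add: iso)
  ultimately show ?thesis unfolding aut_md_def using comm by blast
qed


theorem theorem10:
  fixes \<mu> :: "'a::metric_space measure" and T :: "'a \<Rightarrow> 'a"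
    and \<nu> :: "'b::metric_space measure" and S :: "'b \<Rightarrow> 'b"
    and L L' :: "('a \<times> 'b) measure" and U :: "'a \<times> 'b \<Rightarrow> 'a \<times> 'b"
  assumes "cmmps \<mu> T" and "cmmps \<nu> S"
    and "continuous_on UNIV T" and "continuous_on UNIV S"
    and "full_support \<mu>" and "full_support \<nu>"
    and "joining \<mu> \<nu> T S L" and "joining \<mu> \<nu> T S L'"
    and "kp_iso T S L L' U"
  shows "\<exists>A B. aut_md \<mu> T A \<and> aut_md \<nu> S B
           \<and> (AE z in L. U z = (A (fst z), B (snd z)))
           \<and> L' = distr (completion L) borel (map_prod A B)"
proof -
  from assms(1) have cX: "compact (UNIV::'a set)" "sets \<mu> = sets borel"
    unfolding cmmps_def by auto
  from assms(2) have cY: "compact (UNIV::'b set)" "sets \<nu> = sets borel"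
    unfolding cmmps_def by auto
  from assms(7) have L: "prob_space L" "sets L = sets borel" "distr L borel fst = \<mu>" "distr L borel snd = \<nu>"
    unfolding joining_def by auto
  from assms(8) have L': "prob_space L'" "sets L' = sets borel" "distr L' borel fst = \<mu>" "distr L' borel snd = \<nu>"
    unfolding joining_def by auto
  from assms(9) have U: "U \<in> completion L \<rightarrow>\<^sub>M completion L'" "distr (completion L) (completion L') U = completion L'"
    unfolding kp_iso_def mod0_iso_def by auto
  from assms(9) have KX: "\<And>a b. AE p in L \<Otimes>\<^sub>M L.
        dist ((T^^a) (fst (fst p))) ((T^^b) (fst (snd p)))
        = dist ((T^^a) (fst (U (fst p)))) ((T^^b) (fst (U (snd p))))"
    unfolding kp_iso_def by blast
  from assms(9) have KY: "\<And>a b. AE p in L \<Otimes>\<^sub>M L.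
        dist ((S^^a) (snd (fst p))) ((S^^b) (snd (snd p)))
        = dist ((S^^a) (snd (U (fst p)))) ((S^^b) (snd (U (snd p))))"
    unfolding kp_iso_def by blast
  have KX0: "AE q in L \<Otimes>\<^sub>M L. dist (fst (fst q)) (fst (snd q)) = dist (fst (U (fst q))) (fst (U (snd q)))"
    using KX[of 0 0] by simp
  have KX1: "AE q in L \<Otimes>\<^sub>M L. dist (T (fst (fst q))) (fst (snd q)) = dist (T (fst (U (fst q)))) (fst (U (snd q)))"
    using KX[of 1 0] by simp
  have KY0: "AE q in L \<Otimes>\<^sub>M L. dist (snd (fst q)) (snd (snd q)) = dist (snd (U (fst q))) (snd (U (snd q)))"
    using KY[of 0 0] by simp
  have KY1: "AE q in L \<Otimes>\<^sub>M L. dist (S (snd (fst q))) (snd (snd q)) = dist (S (snd (U (fst q)))) (snd (U (snd q)))"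
    using KY[of 1 0] by simp
  have fstb: "fst \<in> borel \<rightarrow>\<^sub>M (borel::'a measure)"
    by (intro borel_measurable_continuous_onI continuous_intros)
  have sndb: "snd \<in> borel \<rightarrow>\<^sub>M (borel::'b measure)"
    by (intro borel_measurable_continuous_onI continuous_intros)
  have fstL: "fst \<in> L \<rightarrow>\<^sub>M (borel::'a measure)"
    unfolding measurable_cong_sets[OF L(2) refl[of "sets (borel::'a measure)"]] by (rule fstb)
  have fstL': "fst \<in> L' \<rightarrow>\<^sub>M (borel::'a measure)"
    unfolding measurable_cong_sets[OF L'(2) refl[of "sets (borel::'a measure)"]] by (rule fstb)
  have sndL: "snd \<in> L \<rightarrow>\<^sub>M (borel::'b measure)"
    unfolding measurable_cong_sets[OF L(2) refl[of "sets (borel::'b measure)"]] by (rule sndb)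
  have sndL': "snd \<in> L' \<rightarrow>\<^sub>M (borel::'b measure)"
    unfolding measurable_cong_sets[OF L'(2) refl[of "sets (borel::'b measure)"]] by (rule sndb)
  have "\<exists>A. (\<forall>x y. dist (A x) (A y) = dist x y) \<and> (AE z in L. fst (U z) = A (fst z))"
    by (rule key[OF cX(1) L(1) fstL L(3) assms(5)]) (use KX0 in simp)
  then obtain A where Aiso: "\<And>x y. dist (A x) (A y) = dist x y" and AEA: "AE z in L. fst (U z) = A (fst z)"
    by blast
  have "\<exists>B. (\<forall>x y. dist (B x) (B y) = dist x y) \<and> (AE z in L. snd (U z) = B (snd z))"
    by (rule key[OF cY(1) L(1) sndL L(4) assms(6)]) (use KY0 in simp)
  then obtain B where Biso: "\<And>x y. dist (B x) (B y) = dist x y" and AEB: "AE z in L. snd (U z) = B (snd z)"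
    by blast
  have commA: "AE x in \<mu>. A (T x) = T (A x)"
    by (rule commute_lemma[OF L(1) fstL L(3) assms(5) Aiso assms(3) AEA]) (use KX1 in simp)
  have commB: "AE x in \<nu>. B (S x) = S (B x)"
    by (rule commute_lemma[OF L(1) sndL L(4) assms(6) Biso assms(4) AEB]) (use KY1 in simp)
  have cA: "continuous_on UNIV A" by (rule iso_cont[OF Aiso])
  have cB: "continuous_on UNIV B" by (rule iso_cont[OF Biso])
  have Ab: "A \<in> borel \<rightarrow>\<^sub>M borel" by (rule borel_measurable_continuous_onI[OF cA])
  have Bb: "B \<in> borel \<rightarrow>\<^sub>M borel" by (rule borel_measurable_continuous_onI[OF cB])
  have DA: "distr \<mu> borel A = \<mu>" by (rule pres_lemma[OF U fstL fstL' L(3) L'(3) Ab AEA])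
  have DB: "distr \<nu> borel B = \<nu>" by (rule pres_lemma[OF U sndL sndL' L(4) L'(4) Bb AEB])
  have autA: "aut_md \<mu> T A" by (rule aut_lemma[OF cX Aiso DA commA])
  have autB: "aut_md \<nu> S B" by (rule aut_lemma[OF cY Biso DB commB])
  have AEU: "AE z in L. U z = (A (fst z), B (snd z))"
    using AEA AEB by eventually_elim (simp add: prod_eq_iff)
  have mp: "map_prod A B = (\<lambda>z. (A (fst z), B (snd z)))" by (auto simp: fun_eq_iff)
  have cAB: "continuous_on UNIV (map_prod A B)"
    unfolding mp
    by (intro continuous_on_Pair continuous_on_compose2[OF cA] continuous_on_compose2[OF cB]
        continuous_on_fst continuous_on_snd continuous_on_id) auto
  have ABL: "map_prod A B \<in> L \<rightarrow>\<^sub>M borel"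
    unfolding measurable_cong_sets[OF L(2) refl[of "sets (borel::('a \<times> 'b) measure)"]]
    by (rule borel_measurable_continuous_onI[OF cAB])
  have ABc: "map_prod A B \<in> completion L \<rightarrow>\<^sub>M borel" by (rule measurable_completion[OF ABL])
  have "L' = distr (completion L) borel (map_prod A B)"
  proof (rule measure_eqI)
    show "sets L' = sets (distr (completion L) borel (map_prod A B))" using L'(2) by simp
    fix E assume E': "E \<in> sets L'"
    then have E: "E \<in> sets borel" using L'(2) by simp
    have Ec: "E \<in> sets (completion L')" using E' by simp
    have spL: "space L = UNIV" using sets_eq_imp_space_eq[OF L(2)] by simp
    have spL': "space L' = UNIV" using sets_eq_imp_space_eq[OF L'(2)] by simp
    have S1: "map_prod A B -` E \<inter> space L \<in> sets (completion L)"
      using measurable_sets[OF ABc E] by simp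
    have S2: "U -` E \<inter> space L \<in> sets (completion L)"
      using measurable_sets[OF U(1) Ec] by simp
    have "emeasure (distr (completion L) borel (map_prod A B)) E
        = emeasure (completion L) (map_prod A B -` E \<inter> space L)"
      using emeasure_distr[OF ABc E] by simp
    also have "\<dots> = emeasure (completion L) (U -` E \<inter> space L)"
    proof (rule emeasure_eq_AE)
      show "AE x in completion L. (x \<in> map_prod A B -` E \<inter> space L) = (x \<in> U -` E \<inter> space L)"
        using AE_completion[OF AEU] by eventually_elim (auto simp: map_prod_def split_beta)
    qed (use S1 S2 in auto)
    also have "\<dots> = emeasure (distr (completion L) (completion L') U) E"
      using emeasure_distr[OF U(1) Ec] by simp
    also have "\<dots> = emeasure L' E" using U(2) E' by simp
    finally show "emeasure L' E = emeasure (distr (completion L) borel (map_prod A B)) E" by simp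
  qed
  then show ?thesis using autA autB AEU by blast
qed

end
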